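(* Let $\varphi(x)=a_nx^n+\cdots+a_0\in\mathbb{C}[x]$, $a_n\ne0$, have $n$ distinct roots $x_1,\dots,x_n$, let $R\subset\mathbb{C}(x)$ be the subring of rational functions defined at all roots of $\varphi$, and let $h\in R$. If $r(x)=b_{n-1}x^{n-1}+\cdots+b_0$ is the unique polynomial of degree $<n$ representing the coset of $\varphi'(x)h(x)$ in $R/(\varphi)$, then $\sum_{i=1}^nh(x_i)=\dfrac{b_{n-1}}{a_n}$.
   Context: $(\varphi)$ denotes the ideal generated by $\varphi$ in $R$; $R/(\varphi)\cong\mathbb{C}[x]/(\varphi)$. *)

theory Defs
  imports "HOL-Computational_Algebra.Polynomial" "HOL-Computational_Algebra.Fraction_Field"
begin

type_synonym ratfun = "complex poly fract"

definition poly_to_ratfun :: "complex poly \<Rightarrow> ratfun" where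
  "poly_to_ratfun p = Fract p 1"

definition defined_at :: "ratfun \<Rightarrow> complex \<Rightarrow> bool" where
  "defined_at f z \<longleftrightarrow> (\<exists>p q. f = Fract p q \<and> poly q z \<noteq> 0)"

definition eval_ratfun :: "ratfun \<Rightarrow> complex \<Rightarrow> complex" where
  "eval_ratfun f z = (THE c. \<exists>p q. f = Fract p q \<and> poly q z \<noteq> 0 \<and> c = poly p z / poly q z)"

definition R_ring :: "complex poly \<Rightarrow> ratfun set" where
  "R_ring \<phi> = {f. \<forall>z. poly \<phi> z = 0 \<longrightarrow> defined_at f z}"

definition cong_R :: "complex poly \<Rightarrow> ratfun \<Rightarrow> ratfun \<Rightarrow> bool" where
  "cong_R \<phi> f g \<longleftrightarrow> (\<exists>k\<in>R_ring \<phi>. f - g = poly_to_ratfun \<phi> * k)"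

end

theory Submission
  imports Defs
begin

lemma eval_ratfun_Fract:
  assumes "poly q z \<noteq> 0"
  shows "eval_ratfun (Fract p q) z = poly p z / poly q z"
  unfolding eval_ratfun_def
proof (rule the_equality)
  show "\<exists>p' q'. Fract p q = Fract p' q' \<and> poly q' z \<noteq> 0 \<and> poly p z / poly q z = poly p' z / poly q' z"
    using assms by blast
next
  fix c assume "\<exists>p' q'. Fract p q = Fract p' q' \<and> poly q' z \<noteq> 0 \<and> c = poly p' z / poly q' z"
  then obtain p' q' where e: "Fract p q = Fract p' q'" "poly q' z \<noteq> 0" "c = poly p' z / poly q' z"
    by blast
  have "q \<noteq> 0" "q' \<noteq> 0" using assms e(2) by auto
  with e(1) have "p * q' = p' * q" by (simp add: eq_fract)
  hence "poly p z * poly q' z = poly p' z * poly q z" by (metis poly_mult)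
  hence "poly p z / poly q z = poly p' z / poly q' z" using e(2) assms
    by (simp add: frac_eq_eq)
  thus "c = poly p z / poly q z" using e(3) by simp
qed

theorem corollary9p3:
  fixes \<phi> r :: "complex poly" and h :: ratfun and n :: nat
  assumes "\<phi> \<noteq> 0" and "degree \<phi> = n"
    and "card {z. poly \<phi> z = 0} = n"
    and "h \<in> R_ring \<phi>"
    and "degree r < n"
    and "cong_R \<phi> (poly_to_ratfun (pderiv \<phi>) * h) (poly_to_ratfun r)"
  shows "(\<Sum>z\<in>{z. poly \<phi> z = 0}. eval_ratfun h z) = coeff r (n - 1) / lead_coeff \<phi>"
proof -
  define S where "S = {z. poly \<phi> z = 0}"
  define a where "a = lead_coeff \<phi>"
  have a0: "a \<noteq> 0" using assms(1) by (simp add: a_def)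
  have fin: "finite S" using poly_roots_finite[OF assms(1)] by (simp add: S_def)
  have cS: "card S = n" using assms(3) by (simp add: S_def)
  have n0: "n > 0" using assms(5) by simp
  define P where "P = (\<lambda>w::complex. [:-w,1:])"
  define Q where "Q = (\<lambda>z. \<Prod>w\<in>S-{z}. P w)"
  define d where "d = (\<lambda>z. poly (Q z) z)"
  have P0: "P w \<noteq> 0" for w by (simp add: P_def)
  have degQ: "degree (Q z) = n - 1" if "z \<in> S" for z
    unfolding Q_def using that fin cS
    by (subst degree_prod_eq_sum_degree) (auto simp: P0 P_def)
  have lcQ: "lead_coeff (Q z) = 1" for z
    unfolding Q_def by (simp add: lead_coeff_prod P_def)
  have polyQ: "poly (Q z) y = (\<Prod>w\<in>S-{z}. y - w)" for z y
    unfolding Q_def P_def by (simp add: poly_prod)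
  have d0: "d z \<noteq> 0" for z
    unfolding d_def polyQ using fin by auto
  have Qy: "poly (Q x) y = 0" if "y \<in> S" "x \<noteq> y" for x y
    unfolding polyQ using fin that by (auto intro!: prod_zero)
  have phi: "\<phi> = smult a (\<Prod>w\<in>S. P w)"
  proof (rule poly_eqI_degree_lead_coeff[where n=n and A=S])
    show "coeff \<phi> n = coeff (smult a (\<Prod>w\<in>S. P w)) n"
    proof -
      have "degree (\<Prod>w\<in>S. P w) = n"
        using fin cS by (subst degree_prod_eq_sum_degree) (auto simp: P0 P_def)
      moreover have "lead_coeff (\<Prod>w\<in>S. P w) = 1" by (simp add: lead_coeff_prod P_def)
      ultimately show ?thesis using assms(2) by (simp add: a_def)
    qed
    show "n \<le> card S" using cS by simp
    show "degree \<phi> \<le> n" using assms(2) by simp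
    show "degree (smult a (\<Prod>w\<in>S. P w)) \<le> n"
      using fin cS by (simp, subst degree_prod_eq_sum_degree) (auto simp: P0 P_def)
    fix z assume "z \<in> S"
    thus "poly \<phi> z = poly (smult a (\<Prod>w\<in>S. P w)) z"
      using fin by (auto simp: S_def poly_prod P_def)
  qed
  have dphi: "poly (pderiv \<phi>) z = a * d z" if "z \<in> S" for z
  proof -
    have "pderiv \<phi> = smult a (\<Sum>x\<in>S. Q x)"
      by (subst phi) (simp add: pderiv_smult pderiv_prod Q_def P_def pderiv_pCons)
    hence "poly (pderiv \<phi>) z = a * (\<Sum>x\<in>S. poly (Q x) z)" by (simp add: poly_sum)
    also have "(\<Sum>x\<in>S. poly (Q x) z) = poly (Q z) z"
      using fin that by (subst sum.remove[of _ z]) (auto intro!: sum.neutral Qy)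
    finally show ?thesis by (simp add: d_def)
  qed
  have hval: "eval_ratfun h z = poly r z / (a * d z)" if "z \<in> S" for z
  proof -
    from assms(4) that obtain p q where hq: "h = Fract p q" "poly q z \<noteq> 0"
      unfolding R_ring_def defined_at_def S_def by blast
    from assms(6) obtain k where k: "k \<in> R_ring \<phi>"
      "poly_to_ratfun (pderiv \<phi>) * h - poly_to_ratfun r = poly_to_ratfun \<phi> * k"
      unfolding cong_R_def by blast
    from k(1) that obtain c e where ce: "k = Fract c e" "poly e z \<noteq> 0"
      unfolding R_ring_def defined_at_def S_def by blast
    have q0: "q \<noteq> 0" "e \<noteq> 0" using hq ce by auto
    from k(2) have "Fract (pderiv \<phi>) 1 * Fract p q - Fract r 1 = Fract \<phi> 1 * Fract c e"
      unfolding poly_to_ratfun_def hq ce .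
    hence "Fract (pderiv \<phi> * p) q - Fract r 1 = Fract (\<phi> * c) e"
      by (simp only: mult_fract mult_1)
    moreover have "Fract (pderiv \<phi> * p) q - Fract r 1 = Fract (pderiv \<phi> * p - r * q) q"
      using diff_fract[OF q0(1) one_neq_zero, of "pderiv \<phi> * p" r] by simp
    ultimately have "Fract (pderiv \<phi> * p - r * q) q = Fract (\<phi> * c) e" by simp
    hence "(pderiv \<phi> * p - r * q) * e = (\<phi> * c) * q" using q0 by (simp add: eq_fract)
    hence "poly ((pderiv \<phi> * p - r * q) * e) z = poly ((\<phi> * c) * q) z" by simp
    hence "(poly (pderiv \<phi>) z * poly p z - poly r z * poly q z) * poly e z = 0"
      using that by (simp add: S_def)
    hence "poly (pderiv \<phi>) z * poly p z = poly r z * poly q z" using ce(2) by simp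
    hence "a * d z * poly p z = poly r z * poly q z" using dphi[OF that] by simp
    hence eq: "a * d z * poly p z = poly r z * poly q z" .
    have "poly p z / poly q z = (a * d z * poly p z) / (a * d z * poly q z)"
      using a0 d0[of z] by simp
    also have "\<dots> = (poly r z * poly q z) / (a * d z * poly q z)" using eq by simp
    also have "\<dots> = poly r z / (a * d z)" using hq(2) by simp
    finally have "poly p z / poly q z = poly r z / (a * d z)" .
    thus ?thesis using eval_ratfun_Fract[OF hq(2)] hq(1) by simp
  qed
  \<comment> \<open>Lagrange interpolation\<close>
  define L where "L = (\<Sum>z\<in>S. smult (poly r z / d z) (Q z))"
  have rL: "r = L"
  proof (rule poly_eqI_degree[of S])
    fix y assume y: "y \<in> S"
    have "poly L y = (\<Sum>z\<in>S. poly r z / d z * poly (Q z) y)" by (simp add: L_def poly_sum)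
    also have "\<dots> = poly r y / d y * poly (Q y) y"
      using fin y by (subst sum.remove[of _ y]) (auto intro!: sum.neutral Qy)
    also have "\<dots> = poly r y" using d0[of y] by (simp add: d_def)
    finally show "poly r y = poly L y" by simp
  next
    show "degree r < card S" using assms(5) cS by simp
    have "degree L \<le> n - 1" unfolding L_def
      by (rule degree_sum_le) (auto simp: fin degQ intro: order.trans[OF degree_smult_le])
    thus "degree L < card S" using cS n0 by simp
  qed
  have "coeff L (n - 1) = (\<Sum>z\<in>S. poly r z / d z)"
    unfolding L_def coeff_sum coeff_smult
  proof (rule sum.cong)
    fix x assume "x \<in> S"
    hence "coeff (Q x) (n - 1) = 1" using lcQ[of x] degQ[of x] by simp
    thus "poly r x / d x * coeff (Q x) (n - 1) = poly r x / d x" by simp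
  qed simp
  have "(\<Sum>z\<in>S. eval_ratfun h z) = (\<Sum>z\<in>S. (poly r z / d z) / a)"
    by (rule sum.cong) (simp_all add: hval)
  also have "\<dots> = (\<Sum>z\<in>S. poly r z / d z) / a" by (rule sum_divide_distrib[symmetric])
  finally have "(\<Sum>z\<in>S. eval_ratfun h z) = coeff r (n - 1) / a"
    using \<open>coeff L (n - 1) = _\<close> rL by simp
  thus ?thesis by (simp add: S_def a_def)
qed

end
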